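(* Let the state and action spaces be finite and consider an offline–online linear mixture MDP as in the context. If the feature mapping $\phi$ of the offline MDP is not uniformly learnable, then for any offline behavior policies and any design of the auxiliary vectors $\{\widetilde V_{m,h}\}$, we have $\tau(\delta)=\frac{\lambda}{M^{\mathrm{off}}}$ for every $\delta\in(0,1)$.
   Context: The offline MDP has finite state space $\mathcal S$, finite action space $\mathcal A$, horizon $H$, and transitions $P^{\mathrm{off}}(s'\mid s,a)=\langle\theta^{\mathrm{off},*},\phi(s'\mid s,a)\rangle$ for a known feature map $\phi:\mathcal S\times\mathcal A\times\mathcal S\to\mathbb R^d$ (with $\sum_{s'}|\phi_j(s'\mid s,a)|\le1$). $\phi(\cdot\mid s,a)\in\mathbb R^{d\times|\mathcal S|}$ has columns $\phi(s'\mid s,a)$. Offline data: $M^{\mathrm{off}}$ trajectories of length $H$ generated by (possibly adaptive) behavior policies in the offline MDP, with states/actions $s^{\mathrm{off}}_{m,h},a^{\mathrm{off}}_{m,h}$. The learner chooses auxiliary vectors $\widetilde V_{m,h}\in\mathbb R^{|\mathcal S|}$ ($\widetilde V_{m,H+1}=0$), and $G_{\mathrm{off}}=\sum_{m=1}^{M^{\mathrm{off}}}\sum_{h=1}^H x^{\mathrm{off}}_{m,h}(x^{\mathrm{off}}_{m,h})^\top$ with $x^{\mathrm{off}}_{m,h}=\phi(\cdot\mid s^{\mathrm{off}}_{m,h},a^{\mathrm{off}}_{m,h})\widetilde V_{m,h+1}$. For fixed $\lambda>0$ and $\delta\in(0,1)$, $\tau(\delta)=\sup\{z\ge0:\Pr(\lambda_{\min}(\lambda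 I+G_{\mathrm{off}})/M^{\mathrm{off}}\ge z)\ge1-\delta\}$. Uniform learnability: $\phi$ is uniformly learnable if there exist fixed positive integers $I,L$, probe vectors $V_1,\dots,V_L\in[-1,1]^{|\mathcal S|}$ and state–action pairs $(s_1,a_1),\dots,(s_I,a_I)$ such that $\lambda_{\min}\big(\sum_{i=1}^I\sum_{l=1}^L\phi(\cdot\mid s_i,a_i)V_l(\phi(\cdot\mid s_i,a_i)V_l)^\top\big)\ge\kappa$ for some constant $\kappa>0$. *)

theory Defs
  imports "HOL-Probability.Probability"
begin

definition lambda_min :: "real^'d^'d \<Rightarrow> real" where
  "lambda_min A = Inf {\<mu>. \<exists>v. v \<noteq> 0 \<and> A *v v = \<mu> *\<^sub>R v}"

definition outer :: "real^'d \<Rightarrow> real^'d \<Rightarrow> real^'d^'d" where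
  "outer x y = (\<chi> i j. x $ i * y $ j)"

definition phiV :: "('s::finite \<Rightarrow> 'a \<Rightarrow> 's \<Rightarrow> real^'d) \<Rightarrow> 's \<Rightarrow> 'a \<Rightarrow> ('s \<Rightarrow> real) \<Rightarrow> real^'d" where
  "phiV \<phi> s a V = (\<Sum>s'\<in>UNIV. V s' *\<^sub>R \<phi> s a s')"

definition uniformly_learnable :: "('s::finite \<Rightarrow> 'a::finite \<Rightarrow> 's \<Rightarrow> real^'d) \<Rightarrow> bool" where
  "uniformly_learnable \<phi> \<longleftrightarrow>
     (\<exists>I L :: nat. I > 0 \<and> L > 0 \<and>
        (\<exists>V :: nat \<Rightarrow> 's \<Rightarrow> real. (\<forall>l<L. \<forall>s'. \<bar>V l s'\<bar> \<le> 1) \<and>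
          (\<exists>sa :: nat \<Rightarrow> 's \<times> 'a. \<exists>\<kappa>>0.
             lambda_min (\<Sum>i<I. \<Sum>l<L. outer (phiV \<phi> (fst (sa i)) (snd (sa i)) (V l))
                                           (phiV \<phi> (fst (sa i)) (snd (sa i)) (V l))) \<ge> \<kappa>)))"

text \<open>A (possibly adaptive, history-dependent) behavior policy
  pi gets the previously completed trajectories, the current partial trajectory and the
  current state; the initial-state distribution mu may also depend on the past trajectories.\<close>
fun gen_ep :: "('s \<Rightarrow> 'a \<Rightarrow> 's pmf) \<Rightarrow> (('s \<times> 'a) list list \<Rightarrow> ('s \<times> 'a) list \<Rightarrow> 's \<Rightarrow> 'a pmf)
    \<Rightarrow> ('s \<times> 'a) list list \<Rightarrow> ('s \<times> 'a) list \<Rightarrow> 's \<Rightarrow> nat \<Rightarrow> ('s \<times> 'a) list pmf" where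
  "gen_ep P \<pi> past cur s 0 = return_pmf []"
| "gen_ep P \<pi> past cur s (Suc n) =
     bind_pmf (\<pi> past cur s) (\<lambda>a.
     bind_pmf (P s a) (\<lambda>s'.
     bind_pmf (gen_ep P \<pi> past (cur @ [(s, a)]) s' n) (\<lambda>rest.
     return_pmf ((s, a) # rest))))"

fun gen_data :: "('s \<Rightarrow> 'a \<Rightarrow> 's pmf) \<Rightarrow> (('s \<times> 'a) list list \<Rightarrow> 's pmf)
    \<Rightarrow> (('s \<times> 'a) list list \<Rightarrow> ('s \<times> 'a) list \<Rightarrow> 's \<Rightarrow> 'a pmf) \<Rightarrow> nat
    \<Rightarrow> ('s \<times> 'a) list list \<Rightarrow> nat \<Rightarrow> ('s \<times> 'a) list list pmf" where
  "gen_data P \<mu> \<pi> H past 0 = return_pmf past"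
| "gen_data P \<mu> \<pi> H past (Suc m) =
     bind_pmf (\<mu> past) (\<lambda>s1.
     bind_pmf (gen_ep P \<pi> past [] s1 H) (\<lambda>ep.
     gen_data P \<mu> \<pi> H (past @ [ep]) m))"

text \<open>Gram matrix G_off for data D (0-based indices: episode m < M, step h < H);
  Vt D m h is the learner's auxiliary vector (may depend on the data), Vt D m (h+1)
  playing the role of V~_{m,h+1}; Vt D m H corresponds to V~_{m,H+1}.\<close>
definition G_off :: "('s::finite \<Rightarrow> 'a \<Rightarrow> 's \<Rightarrow> real^'d) \<Rightarrow> (('s \<times> 'a) list list \<Rightarrow> nat \<Rightarrow> nat \<Rightarrow> 's \<Rightarrow> real)
    \<Rightarrow> nat \<Rightarrow> nat \<Rightarrow> ('s \<times> 'a) list list \<Rightarrow> real^'d^'d" where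
  "G_off \<phi> Vt M H D =
     (\<Sum>m<M. \<Sum>h<H.
        outer (phiV \<phi> (fst (D ! m ! h)) (snd (D ! m ! h)) (Vt D m (Suc h)))
              (phiV \<phi> (fst (D ! m ! h)) (snd (D ! m ! h)) (Vt D m (Suc h))))"

definition tau :: "('s::finite \<Rightarrow> 'a \<Rightarrow> 's \<Rightarrow> real^'d) \<Rightarrow> (('s \<times> 'a) list list \<Rightarrow> nat \<Rightarrow> nat \<Rightarrow> 's \<Rightarrow> real)
    \<Rightarrow> nat \<Rightarrow> nat \<Rightarrow> real \<Rightarrow> ('s \<times> 'a) list list pmf \<Rightarrow> real \<Rightarrow> real" where
  "tau \<phi> Vt M H lam \<Omega> \<delta> =
     Sup {z. z \<ge> 0 \<and>
        measure_pmf.prob \<Omega> {D. lambda_min (lam *\<^sub>R mat 1 + G_off \<phi> Vt M H D) / real M \<ge> z} \<ge> 1 - \<delta>}"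

end

theory Submission
  imports Defs
begin

lemma quad_zero:
  fixes a b :: real
  assumes "b \<ge> 0" "\<And>t. 0 \<le> 2*t*a + t^2*b"
  shows "a = 0"
proof -
  define t where "t = -a/(b+1)"
  have b1: "b + 1 > 0" using assms(1) by simp
  have e: "2*t*a + t^2*b = -(a^2*(b+2))/(b+1)^2"
    proof -
    have "b + 1 \<noteq> 0" using b1 by simp
    then show ?thesis unfolding t_def
      by (simp add: power_divide divide_simps power2_eq_square) (simp add: algebra_simps)
  qed
  have "0 \<le> -(a^2*(b+2))/(b+1)^2" using assms(2)[of t] e by simp
  hence "a^2*(b+2)/(b+1)^2 \<le> 0" by simp
  hence "a^2*(b+2) \<le> 0" using b1 by (simp add: divide_le_0_iff)
  hence "a^2 \<le> 0" using assms(1) by (smt (verit) mult_nonneg_nonneg zero_le_power2 mult_le_0_iff)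
  thus ?thesis by simp
qed

lemma sym_eig:
  fixes f :: "real^'n \<Rightarrow> real^'n"
  assumes lin: "linear f" and sym: "\<And>v w. v \<bullet> f w = w \<bullet> f v"
  shows "\<exists>u m. u \<noteq> 0 \<and> f u = m *\<^sub>R u \<and> (\<forall>v. m * (v \<bullet> v) \<le> v \<bullet> f v)"
proof -
  have cont: "continuous_on (sphere 0 1) (\<lambda>v. v \<bullet> f v)"
    by (intro continuous_intros linear_continuous_on lin[unfolded linear_conv_bounded_linear])
  have ne: "sphere (0::real^'n) 1 \<noteq> {}"
    using norm_axis_1 by (metis mem_sphere_0 empty_iff)
  obtain u where u: "u \<in> sphere 0 1" and umin: "\<And>y. y \<in> sphere 0 1 \<Longrightarrow> u \<bullet> f u \<le> y \<bullet> f y"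
    using continuous_attains_inf[OF compact_sphere ne cont] by blast
  define m where "m = u \<bullet> f u"
  have uu: "u \<bullet> u = 1" using u by (simp add: dot_square_norm)
  have fs: "f (c *\<^sub>R v) = c *\<^sub>R f v" for c v using lin by (simp add: linear_scale)
  have fa: "f (v + w) = f v + f w" for v w using lin by (simp add: linear_add)
  have pos: "m * (v \<bullet> v) \<le> v \<bullet> f v" for v
  proof (cases "v = 0")
    case True then show ?thesis using lin by (simp add: linear_0)
  next
    case False
    define c where "c = 1 / norm v"
    have c: "c > 0" using False by (simp add: c_def)
    have "c *\<^sub>R v \<in> sphere 0 1" using False by (simp add: c_def)
    hence "m \<le> (c *\<^sub>R v) \<bullet> f (c *\<^sub>R v)" using umin m_def by blast
    hence "m \<le> c^2 * (v \<bullet> f v)" by (simp add: fs power2_eq_square)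
    moreover have "c^2 * (v \<bullet> v) = 1" using False by (simp add: c_def dot_square_norm field_simps)
    ultimately have "m * (c^2 * (v \<bullet> v)) \<le> c^2 * (v \<bullet> f v)" by simp
    thus ?thesis using c by (simp add: mult.left_commute)
  qed
  have key: "w \<bullet> (f u - m *\<^sub>R u) = 0" for w
  proof (rule quad_zero[where b = "w \<bullet> f w - m * (w \<bullet> w)"])
    show "0 \<le> w \<bullet> f w - m * (w \<bullet> w)" using pos[of w] by simp
    fix t :: real
    have "0 \<le> (u + t *\<^sub>R w) \<bullet> f (u + t *\<^sub>R w) - m * ((u + t *\<^sub>R w) \<bullet> (u + t *\<^sub>R w))"
      using pos by smt
    also have "\<dots> = (u \<bullet> f u - m * (u \<bullet> u)) + 2 * t * (w \<bullet> (f u - m *\<^sub>R u)) + t^2 * (w \<bullet> f w - m * (w \<bullet> w))"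
      using sym[of u w] by (simp add: fa fs inner_add_left inner_add_right inner_diff_right algebra_simps power2_eq_square inner_commute[of u w])
    also have "\<dots> = 2 * t * (w \<bullet> (f u - m *\<^sub>R u)) + t^2 * (w \<bullet> f w - m * (w \<bullet> w))"
      using uu m_def by simp
    finally show "0 \<le> 2 * t * (w \<bullet> (f u - m *\<^sub>R u)) + t^2 * (w \<bullet> f w - m * (w \<bullet> w))" .
  qed
  have "f u = m *\<^sub>R u" using key[of "f u - m *\<^sub>R u"] by simp
  moreover have "u \<noteq> 0" using uu by auto
  ultimately show ?thesis using pos by blast
qed


lemma sum_mv: "finite K \<Longrightarrow> (sum A K) *v v = (\<Sum>k\<in>K. A k *v v)"
  for A :: "'k \<Rightarrow> real^'n^'m"
  by (induction K rule: finite_induct) (simp_all add: matrix_vector_mult_add_rdistrib)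

lemma outer_mv: "outer x x *v v = (x \<bullet> v) *\<^sub>R x"
  by (simp add: vec_eq_iff matrix_vector_mult_def outer_def inner_vec_def sum_distrib_left sum_distrib_right mult_ac)

lemma scale_mv: "(c *\<^sub>R A) *v v = c *\<^sub>R (A *v v)" for A :: "real^'n^'m"
  by (simp add: vec_eq_iff matrix_vector_mult_def sum_distrib_left mult_ac)

lemma phiV_scale: "phiV \<phi> s a (\<lambda>x. c * W x) = c *\<^sub>R phiV \<phi> s a W"
  by (simp add: phiV_def scaleR_sum_right)

lemma kernel_exists:
  fixes \<phi> :: "'s::finite \<Rightarrow> 'a::finite \<Rightarrow> 's \<Rightarrow> real^'d"
    and n :: nat
  assumes not_ul: "\<not> uniformly_learnable \<phi>"
  shows "\<exists>u::real^'d. u \<noteq> 0 \<and> (\<forall>i<n. phiV \<phi> (fst (sa i)) (snd (sa i)) (W i) \<bullet> u = 0)"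
proof (cases "n = 0")
  case True
  have "(axis undefined 1 :: real^'d) \<noteq> 0" by (simp add: axis_eq_0_iff)
  then show ?thesis using True by blast
next
  case False
  define c where "c l = 1/(1 + (\<Sum>s\<in>UNIV. \<bar>W l s\<bar>))" for l
  define V where "V l s = c l * W l s" for l s
  define y where "y i l = phiV \<phi> (fst(sa i)) (snd(sa i)) (V l)" for i l
  define S where "S = (\<Sum>i<n. \<Sum>l<n. outer (y i l) (y i l))"
  have cpos: "c l > 0" for l
  proof -
    have "0 \<le> (\<Sum>s\<in>UNIV. \<bar>W l s\<bar>)" by (simp add: sum_nonneg)
    thus ?thesis unfolding c_def by (smt (verit) divide_pos_pos)
  qed
  have Vb: "\<bar>V l s\<bar> \<le> 1" for l s
  proof -
    have le: "\<bar>W l s\<bar> \<le> (\<Sum>s\<in>UNIV. \<bar>W l s\<bar>)" by (rule member_le_sum) auto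
    have "\<bar>V l s\<bar> = \<bar>W l s\<bar> / (1 + (\<Sum>s\<in>UNIV. \<bar>W l s\<bar>))"
      using cpos[of l] by (simp add: V_def c_def abs_mult)
    also have "\<dots> \<le> 1" using le by (simp add: divide_le_eq_1, smt (verit))
    finally show ?thesis .
  qed
  define F where "F v = (\<Sum>i<n. \<Sum>l<n. (y i l \<bullet> v) *\<^sub>R y i l)" for v
  have SF: "S *v v = F v" for v
    unfolding S_def F_def by (simp add: sum_mv outer_mv)
  have qF: "w \<bullet> F v = (\<Sum>i<n. \<Sum>l<n. (y i l \<bullet> v) * (y i l \<bullet> w))" for v w
    unfolding F_def by (simp add: inner_sum_right mult_ac inner_commute)
  have lin: "linear ((*v) S)" by simp
  obtain u m0 where u: "u \<noteq> 0" and eu: "S *v u = m0 *\<^sub>R u" and mp: "\<forall>v. m0 * (v \<bullet> v) \<le> v \<bullet> (S *v v)"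
  proof -
    have sym: "\<And>v w. v \<bullet> ((*v) S w) = w \<bullet> ((*v) S v)" using SF qF by (simp add: mult.commute)
    from sym_eig[OF lin sym] show ?thesis using that by blast
  qed
  have lm: "lambda_min S = m0"
    unfolding lambda_min_def
  proof (rule cInf_eq_minimum)
    show "m0 \<in> {\<mu>. \<exists>v. v \<noteq> 0 \<and> S *v v = \<mu> *\<^sub>R v}" using u eu by blast
  next
    fix x assume "x \<in> {\<mu>. \<exists>v. v \<noteq> 0 \<and> S *v v = \<mu> *\<^sub>R v}"
    then obtain v where v: "v \<noteq> 0" "S *v v = x *\<^sub>R v" by blast
    have "m0 * (v \<bullet> v) \<le> x * (v \<bullet> v)" using mp[rule_format, of v] v(2) by simp
    moreover have "v \<bullet> v > 0" using v by simp
    ultimately show "m0 \<le> x" by simp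
  qed
  have m0nn: "m0 \<ge> 0"
  proof -
    have "m0 * (u \<bullet> u) = u \<bullet> F u" using eu SF by simp
    also have "\<dots> \<ge> 0" unfolding qF by (intro sum_nonneg) simp
    finally show ?thesis using u by (smt (verit) inner_gt_zero_iff zero_le_mult_iff)
  qed
  have "m0 = 0"
  proof (rule ccontr)
    assume "m0 \<noteq> 0"
    hence "m0 > 0" using m0nn by simp
    have lmS: "lambda_min (\<Sum>i<n. \<Sum>l<n. outer (phiV \<phi> (fst (sa i)) (snd (sa i)) (V l))
                                           (phiV \<phi> (fst (sa i)) (snd (sa i)) (V l))) \<ge> m0"
      using lm unfolding S_def y_def by simp
    have "uniformly_learnable \<phi>"
      unfolding uniformly_learnable_def
    proof (rule exI[of _ n], rule exI[of _ n], intro conjI)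
      show "n > 0" using False by simp
      show "n > 0" using False by simp
      show "\<exists>V. (\<forall>l<n. \<forall>s'. \<bar>V l s'\<bar> \<le> 1) \<and> (\<exists>sa. \<exists>\<kappa>>0.
             lambda_min (\<Sum>i<n. \<Sum>l<n. outer (phiV \<phi> (fst (sa i)) (snd (sa i)) (V l))
                                           (phiV \<phi> (fst (sa i)) (snd (sa i)) (V l))) \<ge> \<kappa>)"
      proof (rule exI[of _ V], intro conjI)
        show "\<forall>l<n. \<forall>s'. \<bar>V l s'\<bar> \<le> 1" using Vb by simp
        show "\<exists>sa. \<exists>\<kappa>>0.
             lambda_min (\<Sum>i<n. \<Sum>l<n. outer (phiV \<phi> (fst (sa i)) (snd (sa i)) (V l))
                                           (phiV \<phi> (fst (sa i)) (snd (sa i)) (V l))) \<ge> \<kappa>"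
          using lmS \<open>m0 > 0\<close> by blast
      qed
    qed
    with not_ul show False by simp
  qed
  hence "u \<bullet> F u = 0" using eu SF by simp
  hence "(\<Sum>i<n. \<Sum>l<n. (y i l \<bullet> u) * (y i l \<bullet> u)) = 0" by (simp add: qF)
  hence "\<forall>i\<in>{..<n}. (\<Sum>l<n. (y i l \<bullet> u) * (y i l \<bullet> u)) = 0"
    by (subst (asm) sum_nonneg_eq_0_iff) (auto intro: sum_nonneg)
  hence "\<forall>i<n. \<forall>l\<in>{..<n}. (y i l \<bullet> u) * (y i l \<bullet> u) = 0"
    by (subst (asm) sum_nonneg_eq_0_iff) auto
  hence "\<forall>i<n. y i i \<bullet> u = 0" by simp
  moreover have "y i i = c i *\<^sub>R phiV \<phi> (fst (sa i)) (snd (sa i)) (W i)" for i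
    unfolding y_def V_def by (simp add: phiV_scale)
  ultimately have "\<forall>i<n. c i * (phiV \<phi> (fst (sa i)) (snd (sa i)) (W i) \<bullet> u) = 0" by simp
  hence "\<forall>i<n. phiV \<phi> (fst (sa i)) (snd (sa i)) (W i) \<bullet> u = 0"
    using cpos by (metis mult_eq_0_iff less_irrefl)
  thus ?thesis using u by blast
qed

theorem proposition1:
  fixes \<phi> :: "'s::finite \<Rightarrow> 'a::finite \<Rightarrow> 's \<Rightarrow> real^'d"
    and \<theta> :: "real^'d"
    and P :: "'s \<Rightarrow> 'a \<Rightarrow> 's pmf"
    and \<mu> :: "('s \<times> 'a) list list \<Rightarrow> 's pmf"
    and \<pi> :: "('s \<times> 'a) list list \<Rightarrow> ('s \<times> 'a) list \<Rightarrow> 's \<Rightarrow> 'a pmf"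
    and Vt :: "('s \<times> 'a) list list \<Rightarrow> nat \<Rightarrow> nat \<Rightarrow> 's \<Rightarrow> real"
    and M H :: nat and lam \<delta> :: real
  assumes lin_mix: "\<And>s a s'. pmf (P s a) s' = \<theta> \<bullet> \<phi> s a s'"
    and phi_bound: "\<And>s a j. (\<Sum>s'\<in>UNIV. \<bar>\<phi> s a s' $ j\<bar>) \<le> 1"
    and not_ul: "\<not> uniformly_learnable \<phi>"
    and M_pos: "M > 0"
    and Vt_last: "\<And>D m. Vt D m H = (\<lambda>_. 0)"
    and lam_pos: "lam > 0"
    and delta: "0 < \<delta>" "\<delta> < 1"
  shows "tau \<phi> Vt M H lam (gen_data P \<mu> \<pi> H [] M) \<delta> = lam / real M"
proof -
  have lm: "lambda_min (lam *\<^sub>R mat 1 + G_off \<phi> Vt M H D) = lam" for D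
  proof -
    obtain u :: "real^'d" where u: "u \<noteq> 0" and ker: "\<forall>i<M*H. phiV \<phi> (fst (D!(i div H)!(i mod H))) (snd (D!(i div H)!(i mod H))) (Vt D (i div H) (Suc (i mod H))) \<bullet> u = 0"
      using kernel_exists[OF not_ul, of "M*H" "\<lambda>i. D!(i div H)!(i mod H)" "\<lambda>i. Vt D (i div H) (Suc (i mod H))"] by auto
    define x where "x m h = phiV \<phi> (fst (D!m!h)) (snd (D!m!h)) (Vt D m (Suc h))" for m h
    have xu: "x m h \<bullet> u = 0" if "m<M" "h<H" for m h
    proof -
      have "m*H + h < m*H + H" using that by simp
      also have "\<dots> \<le> M*H" using that proof -
        have "Suc m * H \<le> M * H" using that by (intro mult_le_mono1) simp
        thus ?thesis by simp
      qed
      finally have "m*H+h < M*H" .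
      from ker[rule_format, OF this] show ?thesis using that by (simp add: x_def)
    qed
    have Gv: "G_off \<phi> Vt M H D *v v = (\<Sum>m<M. \<Sum>h<H. (x m h \<bullet> v) *\<^sub>R x m h)" for v
      unfolding G_off_def x_def by (simp add: sum_mv outer_mv)
    have Av: "(lam *\<^sub>R mat 1 + G_off \<phi> Vt M H D) *v v = lam *\<^sub>R v + G_off \<phi> Vt M H D *v v" for v
      by (simp add: matrix_vector_mult_add_rdistrib scale_mv)
    show ?thesis unfolding lambda_min_def
    proof (rule cInf_eq_minimum)
      have "G_off \<phi> Vt M H D *v u = 0" unfolding Gv using xu by simp
      then show "lam \<in> {\<mu>. \<exists>v. v \<noteq> 0 \<and> (lam *\<^sub>R mat 1 + G_off \<phi> Vt M H D) *v v = \<mu> *\<^sub>R v}"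
        using u Av by auto
    next
      fix \<mu> assume "\<mu> \<in> {\<mu>. \<exists>v. v \<noteq> 0 \<and> (lam *\<^sub>R mat 1 + G_off \<phi> Vt M H D) *v v = \<mu> *\<^sub>R v}"
      then obtain v where v: "v \<noteq> 0" "lam *\<^sub>R v + G_off \<phi> Vt M H D *v v = \<mu> *\<^sub>R v" using Av by auto
      have "\<mu> * (v \<bullet> v) = v \<bullet> (\<mu> *\<^sub>R v)" by simp
      also have "\<dots> = lam * (v \<bullet> v) + (\<Sum>m<M. \<Sum>h<H. (x m h \<bullet> v) * (x m h \<bullet> v))"
        unfolding v(2)[symmetric] Gv by (simp add: inner_add_right inner_sum_right inner_commute)
      also have "\<dots> \<ge> lam * (v \<bullet> v)" by (simp add: sum_nonneg)
      finally have "lam * (v \<bullet> v) \<le> \<mu> * (v \<bullet> v)" .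
      moreover have "v \<bullet> v > 0" using v by simp
      ultimately show "lam \<le> \<mu>" by simp
    qed
  qed
  let ?\<Omega> = "gen_data P \<mu> \<pi> H [] M"
  have S: "{z. z \<ge> 0 \<and> measure_pmf.prob ?\<Omega> {D. lambda_min (lam *\<^sub>R mat 1 + G_off \<phi> Vt M H D) / real M \<ge> z} \<ge> 1 - \<delta>}
        = {0..lam / real M}"
  proof (intro set_eqI iffI)
    fix z assume z: "z \<in> {z. z \<ge> 0 \<and> measure_pmf.prob ?\<Omega> {D. lambda_min (lam *\<^sub>R mat 1 + G_off \<phi> Vt M H D) / real M \<ge> z} \<ge> 1 - \<delta>}"
    show "z \<in> {0..lam / real M}"
    proof (rule ccontr)
      assume "z \<notin> {0..lam / real M}"
      hence "{D. lambda_min (lam *\<^sub>R mat 1 + G_off \<phi> Vt M H D) / real M \<ge> z} = {}" using z lm by auto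
      thus False using z delta by simp
    qed
  next
    fix z assume z: "z \<in> {0..lam / real M}"
    hence "{D. lambda_min (lam *\<^sub>R mat 1 + G_off \<phi> Vt M H D) / real M \<ge> z} = UNIV" using lm by auto
    thus "z \<in> {z. z \<ge> 0 \<and> measure_pmf.prob ?\<Omega> {D. lambda_min (lam *\<^sub>R mat 1 + G_off \<phi> Vt M H D) / real M \<ge> z} \<ge> 1 - \<delta>}"
      using z delta by simp
  qed
  show ?thesis unfolding tau_def S using lam_pos M_pos by (simp add: cSup_atLeastAtMost)
qed

end
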